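(* The approximate loss of the pseudo-network is convex with respect to the trainable parameters; consequently, for all $t\in[T]$, for any parameters $\theta^*$ and any training set $\mathcal X$ of points $x$ with $\|x\|_2\le\frac12$, $$\tilde L(\nabla g^{(t)},\mathcal X)-\tilde L(\nabla g^*,\mathcal X)\le\big\langle\nabla_\theta\tilde L(\nabla g^{(t)},\mathcal X),\ \theta^{(t)}-\theta^*\big\rangle,$$ where $g^{(t)}$ and $g^*$ denote the pseudo-network models with parameters $\theta^{(t)}$ and $\theta^*$ respectively.
   Context: UNF pseudo-network setting. For $\|x_{1:i}\|_2\le1$, $\hat x_{1:i}=(x_1,\dots,x_i,\sqrt{1-\|x_{1:i}\|_2^2})$. $\sigma'(u)=\mathbf 1\{u\ge0\}$; $\phi(u)=e^u$ ($u<0$), $u+1$ ($u\ge0$). Fixed initial parameters $a_{i,r}\in\mathbb{R}$, $\bar w_{i,r}\in\mathbb{R}^{i+1}$, $\bar b_{i,r}\in\mathbb{R}$ ($i\in[d],r\in[m]$); parameters $\theta=(\theta_1,\dots,\theta_d)$, $\theta_i=(w_{i,r},b_{i,r})_{r\in[m]}$. Pseudo-network $P(x_{1:i};\theta_i)=\sum_ra_{i,r}\sigma'(\langle\bar w_{i,r},\hat x_{1:i}\rangle+\bar b_{i,r})(\langle\bar w_{i,r}+w_{i,r},\hat x_{1:i}\rangle+\bar b_{i,r}+b_{i,r})$ and $\frac{\partial g_i}{\partial x_i}(x_{1:i})=\phi(P(x_{1:i};\theta_i))$. Quadrature with $Q$ points: $\Delta_{x_i}=(x_i+1)/Q$, $q^{(j)}_i=(x_1,\dots,x_{i-1},-1+j\Delta_{x_i})$.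 Approximate loss $\tilde L(\nabla g,x)=\sum_{i=1}^d\big(\sum_{j=1}^Q\Delta_{x_i}\phi(P(q^{(j)}_i;\theta_i))-\log\phi(P(x_{1:i};\theta_i))\big)$ and $\tilde L(\nabla g,\mathcal X)=\frac1{|\mathcal X|}\sum_{x\in\mathcal X}\tilde L(\nabla g,x)$. $\theta^{(t)}$, $t\in[T]$, is any sequence of parameters (in the paper, SGD iterates). *)

theory Defs
  imports "HOL-Analysis.Analysis"
begin

text \<open>Points x are functions nat => real; only the coordinates x 1, ..., x d matter.
  Parameters: w_{i,r} in R^{i+1} is represented by W i r k (k = 1..i+1),
  b_{i,r} by B i r. The fixed initialisation is a i r, wbar i r k, bbar i r.\<close>

definition xhat :: "(nat \<Rightarrow> real) \<Rightarrow> nat \<Rightarrow> nat \<Rightarrow> real" where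
  "xhat x i k = (if k \<le> i then x k else sqrt (1 - (\<Sum>l=1..i. (x l)^2)))"

definition sigma' :: "real \<Rightarrow> real" where
  "sigma' u = (if u \<ge> 0 then 1 else 0)"

definition phi :: "real \<Rightarrow> real" where
  "phi u = (if u < 0 then exp u else u + 1)"

definition P :: "nat \<Rightarrow> (nat \<Rightarrow> nat \<Rightarrow> real) \<Rightarrow> (nat \<Rightarrow> nat \<Rightarrow> nat \<Rightarrow> real) \<Rightarrow> (nat \<Rightarrow> nat \<Rightarrow> real)
    \<Rightarrow> (nat \<Rightarrow> nat \<Rightarrow> nat \<Rightarrow> real) \<Rightarrow> (nat \<Rightarrow> nat \<Rightarrow> real) \<Rightarrow> nat \<Rightarrow> (nat \<Rightarrow> real) \<Rightarrow> real" where
  "P m a wbar bbar W B i x =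
     (\<Sum>r=1..m. a i r
        * sigma' ((\<Sum>k=1..i+1. wbar i r k * xhat x i k) + bbar i r)
        * ((\<Sum>k=1..i+1. (wbar i r k + W i r k) * xhat x i k) + bbar i r + B i r))"

definition qpt :: "nat \<Rightarrow> (nat \<Rightarrow> real) \<Rightarrow> nat \<Rightarrow> nat \<Rightarrow> nat \<Rightarrow> real" where
  "qpt Q x i j = x(i := -1 + real j * ((x i + 1) / real Q))"

definition Lpt :: "nat \<Rightarrow> nat \<Rightarrow> nat \<Rightarrow> (nat \<Rightarrow> nat \<Rightarrow> real) \<Rightarrow> (nat \<Rightarrow> nat \<Rightarrow> nat \<Rightarrow> real) \<Rightarrow> (nat \<Rightarrow> nat \<Rightarrow> real)
    \<Rightarrow> (nat \<Rightarrow> nat \<Rightarrow> nat \<Rightarrow> real) \<Rightarrow> (nat \<Rightarrow> nat \<Rightarrow> real) \<Rightarrow> (nat \<Rightarrow> real) \<Rightarrow> real" where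
  "Lpt d m Q a wbar bbar W B x =
     (\<Sum>i=1..d. (\<Sum>j=1..Q. ((x i + 1) / real Q) * phi (P m a wbar bbar W B i (qpt Q x i j)))
               - ln (phi (P m a wbar bbar W B i x)))"

definition Lset :: "nat \<Rightarrow> nat \<Rightarrow> nat \<Rightarrow> (nat \<Rightarrow> nat \<Rightarrow> real) \<Rightarrow> (nat \<Rightarrow> nat \<Rightarrow> nat \<Rightarrow> real) \<Rightarrow> (nat \<Rightarrow> nat \<Rightarrow> real)
    \<Rightarrow> (nat \<Rightarrow> nat \<Rightarrow> nat \<Rightarrow> real) \<Rightarrow> (nat \<Rightarrow> nat \<Rightarrow> real) \<Rightarrow> (nat \<Rightarrow> real) set \<Rightarrow> real" where
  "Lset d m Q a wbar bbar W B X = (1 / real (card X)) * (\<Sum>x\<in>X. Lpt d m Q a wbar bbar W B x)"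

definition dW :: "((nat \<Rightarrow> nat \<Rightarrow> nat \<Rightarrow> real) \<Rightarrow> (nat \<Rightarrow> nat \<Rightarrow> real) \<Rightarrow> real)
    \<Rightarrow> (nat \<Rightarrow> nat \<Rightarrow> nat \<Rightarrow> real) \<Rightarrow> (nat \<Rightarrow> nat \<Rightarrow> real) \<Rightarrow> nat \<Rightarrow> nat \<Rightarrow> nat \<Rightarrow> real" where
  "dW L W B i r k = deriv (\<lambda>s. L (W(i := (W i)(r := (W i r)(k := s))))  B) (W i r k)"

definition dB :: "((nat \<Rightarrow> nat \<Rightarrow> nat \<Rightarrow> real) \<Rightarrow> (nat \<Rightarrow> nat \<Rightarrow> real) \<Rightarrow> real)
    \<Rightarrow> (nat \<Rightarrow> nat \<Rightarrow> nat \<Rightarrow> real) \<Rightarrow> (nat \<Rightarrow> nat \<Rightarrow> real) \<Rightarrow> nat \<Rightarrow> nat \<Rightarrow> real" where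
  "dB L W B i r = deriv (\<lambda>s. L W (B(i := (B i)(r := s)))) (B i r)"

definition grad_inner :: "nat \<Rightarrow> nat \<Rightarrow> ((nat \<Rightarrow> nat \<Rightarrow> nat \<Rightarrow> real) \<Rightarrow> (nat \<Rightarrow> nat \<Rightarrow> real) \<Rightarrow> real)
    \<Rightarrow> (nat \<Rightarrow> nat \<Rightarrow> nat \<Rightarrow> real) \<Rightarrow> (nat \<Rightarrow> nat \<Rightarrow> real)
    \<Rightarrow> (nat \<Rightarrow> nat \<Rightarrow> nat \<Rightarrow> real) \<Rightarrow> (nat \<Rightarrow> nat \<Rightarrow> real) \<Rightarrow> real" where
  "grad_inner d m L W B W' B' =
     (\<Sum>i=1..d. \<Sum>r=1..m.
        (\<Sum>k=1..i+1. dW L W B i r k * (W i r k - W' i r k)) + dB L W B i r * (B i r - B' i r))"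

end

theory Submission imports Defs begin

definition phid :: "real \<Rightarrow> real" where "phid u = (if u < 0 then exp u else 1)"
definition gd :: "real \<Rightarrow> real" where "gd u = (if u < 0 then 1 else 1 / (u + 1))"

lemma phi_pos: "phi u > 0" by (simp add: phi_def)

lemma phi_deriv: "(phi has_real_derivative phid u) (at u)"
proof -
  have "((\<lambda>x. if x \<in> {..<0} then exp x else x + 1) has_derivative
      (if u \<in> {..<0} then (\<lambda>x. \<lambda>h. exp x * h) u else (\<lambda>x. \<lambda>h. 1 * h) u)) (at u within ({..<0} \<union> {0..}))"
  proof (rule has_derivative_If_within_closures)
    show "((\<lambda>x. exp x) has_derivative (\<lambda>h. exp u * h)) (at u within {..<0} \<union> (closure {..<0} \<inter> closure {0..}))"
      if "u \<in> {..<0} \<union> (closure {..<0} \<inter> closure {0..})"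
      by (rule has_derivative_at_withinI) (auto intro!: derivative_eq_intros)
    show "((\<lambda>x. x + 1) has_derivative (\<lambda>h. 1 * h)) (at u within {0..} \<union> (closure {..<0} \<inter> closure {0..}))"
      if "u \<in> {0..} \<union> (closure {..<0} \<inter> closure {0..})"
      by (rule has_derivative_at_withinI) (auto intro!: derivative_eq_intros)
    show "exp u = u + 1" if "u \<in> closure {..<0::real}" "u \<in> closure {0::real..}" using that by simp
    show "(\<lambda>h. exp u * h) = (\<lambda>h. 1 * h)" if "u \<in> closure {..<0::real}" "u \<in> closure {0::real..}" using that by simp
    show "u \<in> {..<0} \<union> {0..}" by auto
  qed
  moreover have "{..<0} \<union> {0..} = (UNIV::real set)" by auto
  moreover have "(\<lambda>x. if x \<in> {..<0} then exp x else x + 1) = phi" by (auto simp: phi_def fun_eq_iff)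
  ultimately show ?thesis unfolding has_field_derivative_def phid_def
    by (cases "u < 0") auto
qed

lemma lnphi_deriv: "((\<lambda>u. ln (phi u)) has_real_derivative gd u) (at u)"
proof -
  have "((\<lambda>u. ln (phi u)) has_real_derivative (1 / phi u) * phid u) (at u)"
    by (rule DERIV_chain2[OF DERIV_ln_divide[OF phi_pos] phi_deriv])
  moreover have "(1 / phi u) * phid u = gd u" by (simp add: phi_def phid_def gd_def exp_minus)
  ultimately show ?thesis by simp
qed

lemma phi_tangent: "phi v \<ge> phi u + phid u * (v - u)"
proof (cases "u < 0")
  case True
  note u = True
  show ?thesis
  proof (cases "v < 0")
    case True
    have "exp (v - u) \<ge> 1 + (v - u)" by (rule exp_ge_add_one_self)
    then have "exp u * exp (v - u) \<ge> exp u * (1 + (v - u))" by (simp add: mult_left_mono)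
    then show ?thesis using u True by (simp add: phi_def phid_def exp_diff algebra_simps)
  next
    case False
    have "exp (-u) \<ge> 1 + (-u)" by (rule exp_ge_add_one_self)
    then have a: "exp u * (1 - u) \<le> 1" by (simp add: exp_minus field_simps)
    have "exp u \<le> 1" using u by simp
    then have b: "exp u * v \<le> v" using False by (simp add: mult_left_le_one_le)
    show ?thesis using u False a b by (simp add: phi_def phid_def algebra_simps)
  qed
next
  case False
  then show ?thesis using exp_ge_add_one_self[of v] by (auto simp: phi_def phid_def)
qed

lemma lnphi_tangent: "ln (phi v) \<le> ln (phi u) + gd u * (v - u)"
proof (cases "u < 0")
  case True
  then show ?thesis using ln_add_one_self_le_self2[of v]
    by (cases "v < 0") (auto simp: phi_def gd_def add.commute)
next
  case False
  then have u1: "u + 1 \<ge> 1" by simp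
  show ?thesis
  proof (cases "v < 0")
    case True
    have "ln (1 / (u + 1)) \<le> 1 / (u + 1) - 1" using u1 by (intro ln_le_minus_one) simp
    then have a: "ln (u + 1) \<ge> 1 - 1 / (u + 1)" using u1 by (simp add: ln_div)
    have b: "v * u / (u + 1) \<le> 0" using True u1 by (simp add: divide_nonpos_pos mult_nonpos_nonneg)
    have "v \<le> ln (u + 1) + (v - u) / (u + 1)"
    proof -
      have "v - (v - u) / (u + 1) = v * u / (u + 1) + (1 - 1 / (u + 1))"
      proof -
        have n: "u + 1 \<noteq> 0" "1 + u \<noteq> 0" using u1 by linarith+
        show ?thesis proof -
          have "v - (v - u) / (u + 1) = (v * (u + 1) - (v - u)) / (u + 1)" using n by (simp add: diff_divide_distrib)
          also have "\<dots> = (v * u + u) / (u + 1)" by (simp add: algebra_simps)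
          also have "\<dots> = v * u / (u + 1) + ((u + 1) - 1) / (u + 1)" by (simp add: add_divide_distrib)
          also have "\<dots> = v * u / (u + 1) + ((u + 1) / (u + 1) - 1 / (u + 1))" by (simp only: diff_divide_distrib)
          also have "\<dots> = v * u / (u + 1) + (1 - 1 / (u + 1))" using n(1) by (subst divide_self) auto
          finally show ?thesis .
        qed
      qed
      then show ?thesis using a b by linarith
    qed
    then show ?thesis using True False by (simp add: phi_def gd_def)
  next
    case False
    have "ln ((v + 1) / (u + 1)) \<le> (v + 1) / (u + 1) - 1" using u1 False by (intro ln_le_minus_one) simp
    moreover have "(v + 1) / (u + 1) - 1 = (v - u) / (u + 1)" using u1 by (simp add: field_simps)
    moreover have "ln ((v + 1) / (u + 1)) = ln (v + 1) - ln (u + 1)" using u1 False by (simp add: ln_div)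
    ultimately show ?thesis using False \<open>\<not> u < 0\<close> by (simp add: phi_def gd_def)
  qed
qed


lemma tangent_convex:
  fixes \<psi> \<psi>' :: "real \<Rightarrow> real"
  assumes t: "\<And>u v. \<psi> v \<ge> \<psi> u + \<psi>' u * (v - u)" and l: "0 \<le> l" "l \<le> 1"
  shows "\<psi> (l * x + (1 - l) * y) \<le> l * \<psi> x + (1 - l) * \<psi> y"
proof -
  define z where "z = l * x + (1 - l) * y"
  have 1: "l * \<psi> x \<ge> l * (\<psi> z + \<psi>' z * (x - z))" using t l by (simp add: mult_left_mono)
  have 2: "(1 - l) * \<psi> y \<ge> (1 - l) * (\<psi> z + \<psi>' z * (y - z))" using t l by (simp add: mult_left_mono)
  have "l * (\<psi> z + \<psi>' z * (x - z)) + (1 - l) * (\<psi> z + \<psi>' z * (y - z)) = \<psi> z"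
    unfolding z_def by (simp add: algebra_simps)
  then show ?thesis using 1 2 unfolding z_def by linarith
qed

lemma P_affine:
  "P m a wbar bbar (\<lambda>i r k. l * W1 i r k + (1 - l) * W2 i r k) (\<lambda>i r. l * B1 i r + (1 - l) * B2 i r) i y
   = l * P m a wbar bbar W1 B1 i y + (1 - l) * P m a wbar bbar W2 B2 i y"
proof -
  have s: "(\<Sum>k=1..i+1. (wbar i r k + (l * W1 i r k + (1 - l) * W2 i r k)) * xhat y i k)
     = l * (\<Sum>k=1..i+1. (wbar i r k + W1 i r k) * xhat y i k) + (1 - l) * (\<Sum>k=1..i+1. (wbar i r k + W2 i r k) * xhat y i k)" for r
    unfolding sum_distrib_left sum.distrib[symmetric] by (rule sum.cong) (simp_all add: algebra_simps)
  have e: "(\<Sum>k=1..i+1. (wbar i r k + (l * W1 i r k + (1 - l) * W2 i r k)) * xhat y i k) + bbar i r + (l * B1 i r + (1 - l) * B2 i r)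
     = l * ((\<Sum>k=1..i+1. (wbar i r k + W1 i r k) * xhat y i k) + bbar i r + B1 i r)
       + (1 - l) * ((\<Sum>k=1..i+1. (wbar i r k + W2 i r k) * xhat y i k) + bbar i r + B2 i r)" for r
    unfolding s by (simp add: algebra_simps)
  show ?thesis unfolding P_def e sum_distrib_left sum.distrib[symmetric]
    by (rule sum.cong) (simp_all add: algebra_simps)
qed

lemma P_diff:
  "P m a wbar bbar W1 B1 i y - P m a wbar bbar W2 B2 i y
   = (\<Sum>r=1..m. a i r * sigma' ((\<Sum>k=1..i+1. wbar i r k * xhat y i k) + bbar i r)
        * ((\<Sum>k=1..i+1. (W1 i r k - W2 i r k) * xhat y i k) + (B1 i r - B2 i r)))"
proof -
  have s: "(\<Sum>k=1..i+1. (wbar i r k + W1 i r k) * xhat y i k) - (\<Sum>k=1..i+1. (wbar i r k + W2 i r k) * xhat y i k)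
     = (\<Sum>k=1..i+1. (W1 i r k - W2 i r k) * xhat y i k)" for r
    unfolding sum_subtractf[symmetric] by (rule sum.cong) (simp_all add: algebra_simps)
  show ?thesis unfolding P_def sum_subtractf[symmetric]
  proof (rule sum.cong)
    fix r
    have "a i r * sigma' ((\<Sum>k = 1..i + 1. wbar i r k * xhat y i k) + bbar i r) * ((\<Sum>k = 1..i + 1. (wbar i r k + W1 i r k) * xhat y i k) + bbar i r + B1 i r) -
      a i r * sigma' ((\<Sum>k = 1..i + 1. wbar i r k * xhat y i k) + bbar i r) * ((\<Sum>k = 1..i + 1. (wbar i r k + W2 i r k) * xhat y i k) + bbar i r + B2 i r)
      = a i r * sigma' ((\<Sum>k = 1..i + 1. wbar i r k * xhat y i k) + bbar i r) *
        (((\<Sum>k = 1..i + 1. (wbar i r k + W1 i r k) * xhat y i k) - (\<Sum>k = 1..i + 1. (wbar i r k + W2 i r k) * xhat y i k)) + (B1 i r - B2 i r))"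
      by (simp add: algebra_simps)
    then show "a i r * sigma' ((\<Sum>k = 1..i + 1. wbar i r k * xhat y i k) + bbar i r) * ((\<Sum>k = 1..i + 1. (wbar i r k + W1 i r k) * xhat y i k) + bbar i r + B1 i r) -
      a i r * sigma' ((\<Sum>k = 1..i + 1. wbar i r k * xhat y i k) + bbar i r) * ((\<Sum>k = 1..i + 1. (wbar i r k + W2 i r k) * xhat y i k) + bbar i r + B2 i r)
      = a i r * sigma' ((\<Sum>k = 1..i + 1. wbar i r k * xhat y i k) + bbar i r) *
        ((\<Sum>k = 1..i + 1. (W1 i r k - W2 i r k) * xhat y i k) + (B1 i r - B2 i r))"
      unfolding s .
  qed simp
qed

definition kW where
  "kW m a wbar bbar i r k i' y = (if i' = i \<and> r \<in> {1..m} \<and> k \<in> {1..i+1}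
      then a i r * sigma' ((\<Sum>k=1..i+1. wbar i r k * xhat y i k) + bbar i r) * xhat y i k else 0)"

definition kB where
  "kB m a wbar bbar i r i' y = (if i' = i \<and> r \<in> {1..m}
      then a i r * sigma' ((\<Sum>k=1..i+1. wbar i r k * xhat y i k) + bbar i r) else 0)"

lemma P_updW:
  "P m a wbar bbar (W(i := (W i)(r := (W i r)(k := s)))) B i' y
   = P m a wbar bbar W B i' y + (s - W i r k) * kW m a wbar bbar i r k i' y"
proof (cases "i' = i \<and> r \<in> {1..m} \<and> k \<in> {1..i+1}")
  case True
  have inner: "(\<Sum>k'=1..i+1. (wbar i r' k' + (W(i := (W i)(r := (W i r)(k := s)))) i r' k') * xhat y i k')
     = (\<Sum>k'=1..i+1. (wbar i r' k' + W i r' k') * xhat y i k') + (if r' = r then (s - W i r k) * xhat y i k else 0)" for r'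
  proof -
    have "(\<Sum>k'=1..i+1. (wbar i r' k' + (W(i := (W i)(r := (W i r)(k := s)))) i r' k') * xhat y i k')
       = (\<Sum>k'=1..i+1. (wbar i r' k' + W i r' k') * xhat y i k' + (if r' = r \<and> k' = k then (s - W i r k) * xhat y i k else 0))"
      by (rule sum.cong) (auto simp: algebra_simps)
    also have "\<dots> = (\<Sum>k'=1..i+1. (wbar i r' k' + W i r' k') * xhat y i k') + (if r' = r then (s - W i r k) * xhat y i k else 0)"
      using True by (simp add: sum.distrib)
    finally show ?thesis .
  qed
  have "P m a wbar bbar (W(i := (W i)(r := (W i r)(k := s)))) B i' y
     = (\<Sum>r'=1..m. a i r' * sigma' ((\<Sum>k=1..i+1. wbar i r' k * xhat y i k) + bbar i r')
        * ((\<Sum>k=1..i+1. (wbar i r' k + W i r' k) * xhat y i k) + bbar i r' + B i r')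
        + (if r' = r then (s - W i r k) * (a i r * sigma' ((\<Sum>k=1..i+1. wbar i r k * xhat y i k) + bbar i r) * xhat y i k) else 0))"
    using True unfolding P_def by (intro sum.cong refl) (simp only: inner, simp add: algebra_simps)
  also have "\<dots> = P m a wbar bbar W B i' y + (s - W i r k) * kW m a wbar bbar i r k i' y"
    using True unfolding P_def kW_def by (simp add: sum.distrib)
  finally show ?thesis .
next
  case False
  show ?thesis
  proof (cases "i' = i")
    case True
    have "P m a wbar bbar (W(i := (W i)(r := (W i r)(k := s)))) B i' y = P m a wbar bbar W B i' y"
      unfolding P_def using False True
      by (intro sum.cong refl arg_cong2[where f="(*)"] arg_cong2[where f="(+)"]) auto
    moreover have "kW m a wbar bbar i r k i' y = 0" unfolding kW_def by (rule if_not_P[OF False])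
    ultimately show ?thesis by simp
  next
    case False
    then show ?thesis by (simp add: kW_def P_def)
  qed
qed

lemma P_updB:
  "P m a wbar bbar W (B(i := (B i)(r := s))) i' y
   = P m a wbar bbar W B i' y + (s - B i r) * kB m a wbar bbar i r i' y"
proof (cases "i' = i \<and> r \<in> {1..m}")
  case True
  have "P m a wbar bbar W (B(i := (B i)(r := s))) i' y
     = (\<Sum>r'=1..m. a i r' * sigma' ((\<Sum>k=1..i+1. wbar i r' k * xhat y i k) + bbar i r')
        * ((\<Sum>k=1..i+1. (wbar i r' k + W i r' k) * xhat y i k) + bbar i r' + B i r')
        + (if r' = r then (s - B i r) * (a i r * sigma' ((\<Sum>k=1..i+1. wbar i r k * xhat y i k) + bbar i r)) else 0))"
    unfolding P_def using True by (intro sum.cong) (auto simp: algebra_simps)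
  also have "\<dots> = P m a wbar bbar W B i' y + (s - B i r) * kB m a wbar bbar i r i' y"
    using True unfolding P_def kB_def by (simp add: sum.distrib)
  finally show ?thesis .
next
  case False
  show ?thesis
  proof (cases "i' = i")
    case True
    have "P m a wbar bbar W (B(i := (B i)(r := s))) i' y = P m a wbar bbar W B i' y"
      unfolding P_def using False True
      by (intro sum.cong refl arg_cong2[where f="(*)"] arg_cong2[where f="(+)"]) auto
    moreover have "kB m a wbar bbar i r i' y = 0" unfolding kB_def by (rule if_not_P[OF False])
    ultimately show ?thesis by simp
  next
    case False
    then show ?thesis by (simp add: kB_def P_def)
  qed
qed


lemma comp_affine_deriv:
  assumes "\<And>u. (f has_real_derivative f' u) (at u)"
  shows "((\<lambda>s. f (p + (s - s0) * c)) has_real_derivative f' p * c) (at s0)"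
proof -
  have "((\<lambda>s. p + (s - s0) * c) has_real_derivative c) (at s0)"
    by (auto intro!: derivative_eq_intros)
  from DERIV_chain2[OF assms this] show ?thesis by simp
qed

lemma Lset_deriv:
  assumes h: "\<And>s i' y. P m a wbar bbar (Wf s) (Bf s) i' y = P m a wbar bbar W B i' y + (s - s0) * \<kappa> i' y"
  shows "((\<lambda>s. Lset d m Q a wbar bbar (Wf s) (Bf s) X) has_real_derivative
     (1 / real (card X)) * (\<Sum>x\<in>X. \<Sum>i=1..d. (\<Sum>j=1..Q. ((x i + 1) / real Q) * (phid (P m a wbar bbar W B i (qpt Q x i j)) * \<kappa> i (qpt Q x i j)))
        - gd (P m a wbar bbar W B i x) * \<kappa> i x)) (at s0)"
  unfolding Lset_def Lpt_def h
  by (intro DERIV_cmult DERIV_sum DERIV_diff comp_affine_deriv phi_deriv lnphi_deriv)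


lemma dW_eq:
  "dW (\<lambda>W B. Lset d m Q a wbar bbar W B X) W B i r k =
     (1 / real (card X)) * (\<Sum>x\<in>X. \<Sum>i'=1..d. (\<Sum>j=1..Q. ((x i' + 1) / real Q) * (phid (P m a wbar bbar W B i' (qpt Q x i' j)) * kW m a wbar bbar i r k i' (qpt Q x i' j)))
        - gd (P m a wbar bbar W B i' x) * kW m a wbar bbar i r k i' x)"
  unfolding dW_def
  by (rule DERIV_imp_deriv, rule Lset_deriv[where \<kappa>="kW m a wbar bbar i r k"]) (rule P_updW)

lemma dB_eq:
  "dB (\<lambda>W B. Lset d m Q a wbar bbar W B X) W B i r =
     (1 / real (card X)) * (\<Sum>x\<in>X. \<Sum>i'=1..d. (\<Sum>j=1..Q. ((x i' + 1) / real Q) * (phid (P m a wbar bbar W B i' (qpt Q x i' j)) * kB m a wbar bbar i r i' (qpt Q x i' j)))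
        - gd (P m a wbar bbar W B i' x) * kB m a wbar bbar i r i' x)"
  unfolding dB_def
  by (rule DERIV_imp_deriv, rule Lset_deriv[where \<kappa>="kB m a wbar bbar i r"]) (rule P_updB)

definition Lam :: "nat set \<Rightarrow> nat set \<Rightarrow> (nat \<Rightarrow> nat set) \<Rightarrow> (nat \<Rightarrow> nat \<Rightarrow> nat \<Rightarrow> real) \<Rightarrow> (nat \<Rightarrow> nat \<Rightarrow> real)
   \<Rightarrow> (nat \<Rightarrow> nat \<Rightarrow> nat \<Rightarrow> real) \<Rightarrow> (nat \<Rightarrow> nat \<Rightarrow> real) \<Rightarrow> real" where
  "Lam I R K u v F H = (\<Sum>i\<in>I. \<Sum>r\<in>R. (\<Sum>k\<in>K i. F i r k * u i r k) + H i r * v i r)"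

lemma Lam_sum:
  "Lam I R K u v (\<lambda>i r k. \<Sum>n\<in>N. F n i r k) (\<lambda>i r. \<Sum>n\<in>N. H n i r) = (\<Sum>n\<in>N. Lam I R K u v (F n) (H n))"
  unfolding Lam_def
  by (simp add: sum_distrib_right sum.distrib sum.swap[of _ _ N])

lemma Lam_diff:
  "Lam I R K u v (\<lambda>i r k. F i r k - F' i r k) (\<lambda>i r. H i r - H' i r) = Lam I R K u v F H - Lam I R K u v F' H'"
  unfolding Lam_def
  by (simp add: algebra_simps sum_subtractf sum.distrib)

lemma Lam_scale:
  "Lam I R K u v (\<lambda>i r k. c * F i r k) (\<lambda>i r. c * H i r) = c * Lam I R K u v F H"
  unfolding Lam_def
  by (simp add: algebra_simps sum_distrib_left sum.distrib)


lemma Lam_k: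
  assumes "i' \<in> {1..d}"
  shows "Lam {1..d} {1..m} (\<lambda>i. {1..i+1}) (\<lambda>i r k. W1 i r k - W2 i r k) (\<lambda>i r. B1 i r - B2 i r)
      (\<lambda>i r k. kW m a wbar bbar i r k i' y) (\<lambda>i r. kB m a wbar bbar i r i' y)
    = P m a wbar bbar W1 B1 i' y - P m a wbar bbar W2 B2 i' y"
proof -
  define g where "g = (\<Sum>r=1..m. a i' r * sigma' ((\<Sum>k=1..i'+1. wbar i' r k * xhat y i' k) + bbar i' r)
        * ((\<Sum>k=1..i'+1. (W1 i' r k - W2 i' r k) * xhat y i' k) + (B1 i' r - B2 i' r)))"
  have body: "(\<Sum>r\<in>{1..m}. (\<Sum>k\<in>{1..i+1}. kW m a wbar bbar i r k i' y * (W1 i r k - W2 i r k)) + kB m a wbar bbar i r i' y * (B1 i r - B2 i r))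
     = (if i = i' then g else 0)" for i
  proof (cases "i = i'")
    case True
    have inner: "(\<Sum>k\<in>{1..i'+1}. kW m a wbar bbar i' r k i' y * (W1 i' r k - W2 i' r k))
      = (a i' r * sigma' ((\<Sum>k=1..i'+1. wbar i' r k * xhat y i' k) + bbar i' r)) * (\<Sum>k=1..i'+1. (W1 i' r k - W2 i' r k) * xhat y i' k)"
      if "r \<in> {1..m}" for r
      unfolding sum_distrib_left using that by (intro sum.cong) (auto simp: kW_def)
    show ?thesis unfolding g_def True if_P[OF refl]
      by (intro sum.cong refl) (simp only: inner, simp add: kB_def algebra_simps)
  next
    case False
    then show ?thesis by (simp add: kW_def kB_def)
  qed
  show ?thesis unfolding Lam_def body P_diff using assms by (simp add: g_def)
qed


lemma grad_eq:
  "grad_inner d m (\<lambda>W B. Lset d m Q a wbar bbar W B X) W1 B1 W2 B2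
   = (1 / real (card X)) * (\<Sum>x\<in>X. \<Sum>i'=1..d. (\<Sum>j=1..Q. ((x i' + 1) / real Q) * (phid (P m a wbar bbar W1 B1 i' (qpt Q x i' j))
          * (P m a wbar bbar W1 B1 i' (qpt Q x i' j) - P m a wbar bbar W2 B2 i' (qpt Q x i' j))))
        - gd (P m a wbar bbar W1 B1 i' x) * (P m a wbar bbar W1 B1 i' x - P m a wbar bbar W2 B2 i' x))" (is "_ = ?R")
proof -
  have "grad_inner d m (\<lambda>W B. Lset d m Q a wbar bbar W B X) W1 B1 W2 B2
    = Lam {1..d} {1..m} (\<lambda>i. {1..i+1}) (\<lambda>i r k. W1 i r k - W2 i r k) (\<lambda>i r. B1 i r - B2 i r)
        (\<lambda>i r k. dW (\<lambda>W B. Lset d m Q a wbar bbar W B X) W1 B1 i r k) (\<lambda>i r. dB (\<lambda>W B. Lset d m Q a wbar bbar W B X) W1 B1 i r)"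
    unfolding grad_inner_def Lam_def ..
  also have "\<dots> = ?R"
    unfolding dW_eq dB_eq Lam_scale Lam_sum Lam_diff
    apply (rule arg_cong[where f="\<lambda>s. 1 / real (card X) * s"], rule sum.cong[OF refl], rule sum.cong[OF refl])
    apply (simp only: Lam_k)
    done
  finally show ?thesis .
qed


lemma cdist: "(c::real) * (l * A + (1 - l) * B) = l * (c * A) + (1 - l) * (c * B)"
  by (simp add: algebra_simps)

lemma coord_bound:
  fixes d i :: nat and x :: "nat \<Rightarrow> real"
  assumes "sqrt (\<Sum>k=1..d. (x k)^2) \<le> 1/2" "i \<in> {1..d}"
  shows "0 \<le> x i + 1"
proof -
  have "(x i)^2 \<le> (\<Sum>k=1..d. (x k)^2)" using assms(2) by (intro member_le_sum) auto
  also have "\<dots> = (sqrt (\<Sum>k=1..d. (x k)^2))^2" by (simp add: sum_nonneg)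
  also have "\<dots> \<le> (1/2)^2" using assms(1) by (intro power_mono) (auto intro!: sum_nonneg)
  finally have "(x i)^2 \<le> (1/2)^2" .
  then have "\<bar>x i\<bar> \<le> \<bar>1/2::real\<bar>" by (simp only: abs_le_square_iff)
  then show ?thesis by linarith
qed

theorem lemma17:
  fixes d m Q T :: nat
    and a :: "nat \<Rightarrow> nat \<Rightarrow> real" and wbar :: "nat \<Rightarrow> nat \<Rightarrow> nat \<Rightarrow> real" and bbar :: "nat \<Rightarrow> nat \<Rightarrow> real"
    and Wt :: "nat \<Rightarrow> nat \<Rightarrow> nat \<Rightarrow> nat \<Rightarrow> real" and Bt :: "nat \<Rightarrow> nat \<Rightarrow> nat \<Rightarrow> real"
    and Ws :: "nat \<Rightarrow> nat \<Rightarrow> nat \<Rightarrow> real" and Bs :: "nat \<Rightarrow> nat \<Rightarrow> real"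
    and X :: "(nat \<Rightarrow> real) set"
  assumes "finite X"
    and "\<forall>x\<in>X. sqrt (\<Sum>k=1..d. (x k)^2) \<le> 1/2"
  shows "(\<forall>W1 B1 W2 B2 (l::real). 0 \<le> l \<and> l \<le> 1 \<longrightarrow>
            Lset d m Q a wbar bbar (\<lambda>i r k. l * W1 i r k + (1 - l) * W2 i r k)
                                   (\<lambda>i r. l * B1 i r + (1 - l) * B2 i r) X
            \<le> l * Lset d m Q a wbar bbar W1 B1 X + (1 - l) * Lset d m Q a wbar bbar W2 B2 X)
       \<and> (\<forall>t\<in>{1..T}.
            Lset d m Q a wbar bbar (Wt t) (Bt t) X - Lset d m Q a wbar bbar Ws Bs X
            \<le> grad_inner d m (\<lambda>W B. Lset d m Q a wbar bbar W B X) (Wt t) (Bt t) Ws Bs)"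
proof -
  have c0: "0 \<le> (x i + 1) / real Q" if "x \<in> X" "i \<in> {1..d}" for x i
    using coord_bound[where d=d and x=x and i=i] assms(2) that by simp
  have N0: "0 \<le> 1 / real (card X)" by simp
  have part1: "Lset d m Q a wbar bbar (\<lambda>i r k. l * W1 i r k + (1 - l) * W2 i r k)
                                   (\<lambda>i r. l * B1 i r + (1 - l) * B2 i r) X
            \<le> l * Lset d m Q a wbar bbar W1 B1 X + (1 - l) * Lset d m Q a wbar bbar W2 B2 X"
    if l: "0 \<le> l" "l \<le> 1" for W1 B1 W2 B2 l
  proof -
    let ?P1 = "P m a wbar bbar W1 B1" and ?P2 = "P m a wbar bbar W2 B2"
    have ph: "phi (l * u + (1 - l) * v) \<le> l * phi u + (1 - l) * phi v" for u v
      by (rule tangent_convex[OF phi_tangent l])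
    have lph: "- ln (phi (l * u + (1 - l) * v)) \<le> l * (- ln (phi u)) + (1 - l) * (- ln (phi v))" for u v
    proof (rule tangent_convex[where \<psi>'="\<lambda>u. - gd u", OF _ l])
      fix u v show "- ln (phi u) + - gd u * (v - u) \<le> - ln (phi v)" using lnphi_tangent[of v u] by simp
    qed
    have pt: "Lpt d m Q a wbar bbar (\<lambda>i r k. l * W1 i r k + (1 - l) * W2 i r k) (\<lambda>i r. l * B1 i r + (1 - l) * B2 i r) x
       \<le> l * Lpt d m Q a wbar bbar W1 B1 x + (1 - l) * Lpt d m Q a wbar bbar W2 B2 x" if x: "x \<in> X" for x
    proof -
      have "Lpt d m Q a wbar bbar (\<lambda>i r k. l * W1 i r k + (1 - l) * W2 i r k) (\<lambda>i r. l * B1 i r + (1 - l) * B2 i r) x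
        = (\<Sum>i=1..d. (\<Sum>j=1..Q. ((x i + 1) / real Q) * phi (l * ?P1 i (qpt Q x i j) + (1 - l) * ?P2 i (qpt Q x i j)))
               - ln (phi (l * ?P1 i x + (1 - l) * ?P2 i x)))"
        unfolding Lpt_def P_affine ..
      also have "\<dots> \<le> (\<Sum>i=1..d. l * ((\<Sum>j=1..Q. ((x i + 1) / real Q) * phi (?P1 i (qpt Q x i j))) - ln (phi (?P1 i x)))
            + (1 - l) * ((\<Sum>j=1..Q. ((x i + 1) / real Q) * phi (?P2 i (qpt Q x i j))) - ln (phi (?P2 i x))))"
      proof (rule sum_mono)
        fix i assume i: "i \<in> {1..d}"
        have "(\<Sum>j=1..Q. ((x i + 1) / real Q) * phi (l * ?P1 i (qpt Q x i j) + (1 - l) * ?P2 i (qpt Q x i j)))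
          \<le> (\<Sum>j=1..Q. l * (((x i + 1) / real Q) * phi (?P1 i (qpt Q x i j))) + (1 - l) * (((x i + 1) / real Q) * phi (?P2 i (qpt Q x i j))))"
        proof (rule sum_mono)
          fix j
          have "((x i + 1) / real Q) * phi (l * ?P1 i (qpt Q x i j) + (1 - l) * ?P2 i (qpt Q x i j))
            \<le> ((x i + 1) / real Q) * (l * phi (?P1 i (qpt Q x i j)) + (1 - l) * phi (?P2 i (qpt Q x i j)))"
            by (rule mult_left_mono[OF ph c0[OF x i]])
          then show "((x i + 1) / real Q) * phi (l * ?P1 i (qpt Q x i j) + (1 - l) * ?P2 i (qpt Q x i j))
            \<le> l * (((x i + 1) / real Q) * phi (?P1 i (qpt Q x i j))) + (1 - l) * (((x i + 1) / real Q) * phi (?P2 i (qpt Q x i j)))"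
            by (simp only: cdist)
        qed
        also have "\<dots> = l * (\<Sum>j=1..Q. ((x i + 1) / real Q) * phi (?P1 i (qpt Q x i j))) + (1 - l) * (\<Sum>j=1..Q. ((x i + 1) / real Q) * phi (?P2 i (qpt Q x i j)))"
          by (simp only: sum.distrib sum_distrib_left)
        finally show "(\<Sum>j=1..Q. ((x i + 1) / real Q) * phi (l * ?P1 i (qpt Q x i j) + (1 - l) * ?P2 i (qpt Q x i j)))
               - ln (phi (l * ?P1 i x + (1 - l) * ?P2 i x))
          \<le> l * ((\<Sum>j=1..Q. ((x i + 1) / real Q) * phi (?P1 i (qpt Q x i j))) - ln (phi (?P1 i x)))
            + (1 - l) * ((\<Sum>j=1..Q. ((x i + 1) / real Q) * phi (?P2 i (qpt Q x i j))) - ln (phi (?P2 i x)))"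
          using lph[of "?P1 i x" "?P2 i x"] by (simp only: right_diff_distrib mult_minus_right)
      qed
      also have "\<dots> = l * Lpt d m Q a wbar bbar W1 B1 x + (1 - l) * Lpt d m Q a wbar bbar W2 B2 x"
        unfolding Lpt_def by (simp only: sum.distrib sum_distrib_left)
      finally show ?thesis .
    qed
    have "Lset d m Q a wbar bbar (\<lambda>i r k. l * W1 i r k + (1 - l) * W2 i r k) (\<lambda>i r. l * B1 i r + (1 - l) * B2 i r) X
       \<le> (1 / real (card X)) * (\<Sum>x\<in>X. l * Lpt d m Q a wbar bbar W1 B1 x + (1 - l) * Lpt d m Q a wbar bbar W2 B2 x)"
      unfolding Lset_def by (intro mult_left_mono[OF _ N0] sum_mono pt)
    also have "\<dots> = l * Lset d m Q a wbar bbar W1 B1 X + (1 - l) * Lset d m Q a wbar bbar W2 B2 X"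
      unfolding Lset_def by (simp only: sum.distrib sum_distrib_left[symmetric] cdist)
    finally show ?thesis .
  qed
  have part2: "Lset d m Q a wbar bbar W1 B1 X - Lset d m Q a wbar bbar Ws Bs X
            \<le> grad_inner d m (\<lambda>W B. Lset d m Q a wbar bbar W B X) W1 B1 Ws Bs" for W1 B1
  proof -
    let ?P1 = "P m a wbar bbar W1 B1" and ?P2 = "P m a wbar bbar Ws Bs"
    have "Lset d m Q a wbar bbar W1 B1 X - Lset d m Q a wbar bbar Ws Bs X
      = (1 / real (card X)) * (\<Sum>x\<in>X. \<Sum>i=1..d.
          (\<Sum>j=1..Q. ((x i + 1) / real Q) * (phi (?P1 i (qpt Q x i j)) - phi (?P2 i (qpt Q x i j))))
          - (ln (phi (?P1 i x)) - ln (phi (?P2 i x))))"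
    proof -
      have h: "(\<Sum>j=1..Q. ((x i + 1) / real Q) * phi (?P1 i (qpt Q x i j))) - ln (phi (?P1 i x))
          - ((\<Sum>j=1..Q. ((x i + 1) / real Q) * phi (?P2 i (qpt Q x i j))) - ln (phi (?P2 i x)))
        = (\<Sum>j=1..Q. ((x i + 1) / real Q) * (phi (?P1 i (qpt Q x i j)) - phi (?P2 i (qpt Q x i j))))
          - (ln (phi (?P1 i x)) - ln (phi (?P2 i x)))" for x i
        by (simp add: right_diff_distrib sum_subtractf)
      show ?thesis
        unfolding Lset_def Lpt_def right_diff_distrib[symmetric] sum_subtractf[symmetric] h ..
    qed
    also have "\<dots> \<le> (1 / real (card X)) * (\<Sum>x\<in>X. \<Sum>i'=1..d. (\<Sum>j=1..Q. ((x i' + 1) / real Q) * (phid (?P1 i' (qpt Q x i' j))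
          * (?P1 i' (qpt Q x i' j) - ?P2 i' (qpt Q x i' j))))
        - gd (?P1 i' x) * (?P1 i' x - ?P2 i' x))"
    proof (intro mult_left_mono[OF _ N0] sum_mono diff_mono)
      fix x i j assume x: "x \<in> X" and i: "i \<in> {1..d}"
      show "((x i + 1) / real Q) * (phi (?P1 i (qpt Q x i j)) - phi (?P2 i (qpt Q x i j)))
         \<le> ((x i + 1) / real Q) * (phid (?P1 i (qpt Q x i j)) * (?P1 i (qpt Q x i j) - ?P2 i (qpt Q x i j)))"
        using phi_tangent[of "?P1 i (qpt Q x i j)" "?P2 i (qpt Q x i j)"]
        by (intro mult_left_mono[OF _ c0[OF x i]]) (simp add: algebra_simps)
      show "gd (?P1 i x) * (?P1 i x - ?P2 i x) \<le> ln (phi (?P1 i x)) - ln (phi (?P2 i x))"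
        using lnphi_tangent[of "?P2 i x" "?P1 i x"] by (simp add: algebra_simps)
    qed
    also have "\<dots> = grad_inner d m (\<lambda>W B. Lset d m Q a wbar bbar W B X) W1 B1 Ws Bs"
      by (rule grad_eq[symmetric])
    finally show ?thesis .
  qed
  show ?thesis using part1 part2 by blast
qed

end
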